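(* For every tree $T=(V,E,w)$ with positive integer costs there exists an optimal extended strategy function $f$ for $T$ such that $|f(v)|=w(v)$ for every $v\in V$.
   Context: Intervals are of the form $[a,b)$ with integers $0\le a<b$, and $|[a,b)|=b-a$. For intervals $I=[a,b)$, $I'=[a',b')$ write $I>I'$ iff $a\ge b'$. An extended strategy function for $T$ is a map $f$ assigning to each vertex $v$ an interval $f(v)$ with $|f(v)|\ge w(v)$, such that for any distinct $v_1,v_2$ with $f(v_1)\cap f(v_2)\ne\emptyset$, the path between $v_1$ and $v_2$ contains a vertex $v_3$ with $f(v_3)>f(v_1)$ and $f(v_3)>f(v_2)$. An extended strategy function $f$ is optimal if $\sup\bigcup_{v\in V}f(v)$ is minimum among all extended strategy functions for $T$. *)

theory Defs
  imports Main
begin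

definition is_path :: "('a \<Rightarrow> 'a \<Rightarrow> bool) \<Rightarrow> 'a \<Rightarrow> 'a \<Rightarrow> 'a list \<Rightarrow> bool" where
  "is_path E u v p \<longleftrightarrow> p \<noteq> [] \<and> hd p = u \<and> last p = v \<and> distinct p \<and>
     (\<forall>i. Suc i < length p \<longrightarrow> E (p ! i) (p ! Suc i))"

text \<open>A tree: finite nonempty vertex set, simple undirected edges inside V,
connected, and acyclic (every pair of vertices is joined by a unique path).\<close>

definition is_tree :: "'a set \<Rightarrow> ('a \<Rightarrow> 'a \<Rightarrow> bool) \<Rightarrow> bool" where
  "is_tree V E \<longleftrightarrow> finite V \<and> V \<noteq> {} \<and>
     (\<forall>u v. E u v \<longrightarrow> u \<in> V \<and> v \<in> V \<and> u \<noteq> v \<and> E v u) \<and>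
     (\<forall>u\<in>V. \<forall>v\<in>V. \<exists>p. is_path E u v p) \<and>
     (\<forall>u v p q. is_path E u v p \<and> is_path E u v q \<longrightarrow> p = q)"

text \<open>Intervals [a,b) with integers 0 \<le> a < b are represented by pairs (a,b) of naturals.\<close>

definition ival :: "nat \<times> nat \<Rightarrow> nat set" where
  "ival I = {fst I ..< snd I}"

definition ilen :: "nat \<times> nat \<Rightarrow> nat" where
  "ilen I = snd I - fst I"

definition igt :: "nat \<times> nat \<Rightarrow> nat \<times> nat \<Rightarrow> bool" where
  "igt I I' \<longleftrightarrow> fst I \<ge> snd I'"

definition ext_strategy ::
  "'a set \<Rightarrow> ('a \<Rightarrow> 'a \<Rightarrow> bool) \<Rightarrow> ('a \<Rightarrow> nat) \<Rightarrow> ('a \<Rightarrow> nat \<times> nat) \<Rightarrow> bool" where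
  "ext_strategy V E w f \<longleftrightarrow>
     (\<forall>v\<in>V. fst (f v) < snd (f v) \<and> ilen (f v) \<ge> w v) \<and>
     (\<forall>v1\<in>V. \<forall>v2\<in>V. v1 \<noteq> v2 \<and> ival (f v1) \<inter> ival (f v2) \<noteq> {} \<longrightarrow>
        (\<exists>p. is_path E v1 v2 p \<and>
             (\<exists>v3\<in>set p. igt (f v3) (f v1) \<and> igt (f v3) (f v2))))"

text \<open>sup of the union of the intervals [a,b) (as a real supremum) is the maximal right end b.\<close>
definition span :: "'a set \<Rightarrow> ('a \<Rightarrow> nat \<times> nat) \<Rightarrow> nat" where
  "span V f = Max ((\<lambda>v. snd (f v)) ` V)"

definition optimal_strategy ::
  "'a set \<Rightarrow> ('a \<Rightarrow> 'a \<Rightarrow> bool) \<Rightarrow> ('a \<Rightarrow> nat) \<Rightarrow> ('a \<Rightarrow> nat \<times> nat) \<Rightarrow> bool" where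
  "optimal_strategy V E w f \<longleftrightarrow> ext_strategy V E w f \<and>
     (\<forall>g. ext_strategy V E w g \<longrightarrow> span V f \<le> span V g)"

end

theory Submission
  imports Defs
begin

lemma div_block: "(K::nat) > 0 \<Longrightarrow> K*a \<le> x \<Longrightarrow> x < K*a + K \<Longrightarrow> x div K = a"
proof -
  assume "K > 0" "K*a \<le> x" "x < K*a + K"
  then have "K*a div K \<le> x div K" by (intro div_le_mono)
  then have "a \<le> x div K" using \<open>K>0\<close> by simp
  moreover have "x div K < Suc a"
    using \<open>x < K*a + K\<close> \<open>K>0\<close> by (simp add: div_less_iff_less_mult mult.commute)
  ultimately show ?thesis by simp
qed

lemma exists_strategy:
  assumes "finite V"
  shows "\<exists>g. ext_strategy V E w g"
proof -
  obtain h :: "'a \<Rightarrow> nat" and n where hinj: "inj_on h V"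
    using finite_imp_inj_to_nat_seg[OF assms] by blast
  define K where "K = (\<Sum>v\<in>V. w v) + 1"
  have Kpos: "K > 0" by (simp add: K_def)
  define g where "g v = (K * h v, K * h v + K)" for v
  have "\<forall>v\<in>V. fst (g v) < snd (g v) \<and> ilen (g v) \<ge> w v"
  proof
    fix v assume "v \<in> V"
    have "w v \<le> (\<Sum>v\<in>V. w v)" using member_le_sum[OF \<open>v\<in>V\<close>, of w] assms by simp
    then show "fst (g v) < snd (g v) \<and> ilen (g v) \<ge> w v"
      using Kpos by (simp add: g_def ilen_def K_def)
  qed
  moreover have "\<forall>v1\<in>V. \<forall>v2\<in>V. v1 \<noteq> v2 \<longrightarrow> ival (g v1) \<inter> ival (g v2) = {}"
  proof (intro ballI impI)
    fix v1 v2 assume v: "v1 \<in> V" "v2 \<in> V" "v1 \<noteq> v2"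
    show "ival (g v1) \<inter> ival (g v2) = {}"
    proof (rule ccontr)
      assume "ival (g v1) \<inter> ival (g v2) \<noteq> {}"
      then obtain x where "x \<in> ival (g v1)" "x \<in> ival (g v2)" by blast
      then have "x div K = h v1" "x div K = h v2"
        using div_block[OF Kpos] by (auto simp: ival_def g_def)
      then show False using hinj v by (metis inj_on_def)
    qed
  qed
  ultimately have "ext_strategy V E w g" unfolding ext_strategy_def by blast
  then show ?thesis by blast
qed

theorem mainTheorem11:
  fixes V :: "'a set" and E :: "'a \<Rightarrow> 'a \<Rightarrow> bool" and w :: "'a \<Rightarrow> nat"
  assumes "is_tree V E"
    and "\<forall>v\<in>V. w v > 0"
  shows "\<exists>f. optimal_strategy V E w f \<and> (\<forall>v\<in>V. ilen (f v) = w v)"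
proof -
  have fin: "finite V" and ne: "V \<noteq> {}" using assms(1) by (auto simp: is_tree_def)
  obtain g where "ext_strategy V E w g" using exists_strategy[OF fin] by blast
  then obtain f where f: "ext_strategy V E w f"
    and fmin: "\<forall>g. ext_strategy V E w g \<longrightarrow> span V f \<le> span V g"
    using ex_has_least_nat[of "ext_strategy V E w" g "span V"] by blast
  define f' where "f' v = (fst (f v), fst (f v) + w v)" for v
  have fl: "\<forall>v\<in>V. fst (f v) < snd (f v) \<and> ilen (f v) \<ge> w v"
    using f by (simp add: ext_strategy_def)
  have sub: "ival (f' v) \<subseteq> ival (f v)" if "v \<in> V" for v
    using fl that by (auto simp: ival_def f'_def ilen_def)
  have le: "snd (f' v) \<le> snd (f v)" if "v \<in> V" for v
    using fl that by (auto simp: f'_def ilen_def)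
  have s': "ext_strategy V E w f'"
    unfolding ext_strategy_def
  proof (intro conjI ballI impI)
    fix v assume "v \<in> V"
    then show "fst (f' v) < snd (f' v)" "w v \<le> ilen (f' v)"
      using assms(2) by (auto simp: f'_def ilen_def)
  next
    fix v1 v2 assume v: "v1 \<in> V" "v2 \<in> V" "v1 \<noteq> v2 \<and> ival (f' v1) \<inter> ival (f' v2) \<noteq> {}"
    then have "ival (f v1) \<inter> ival (f v2) \<noteq> {}" using sub by blast
    with v f obtain p where p: "is_path E v1 v2 p"
      and v3: "\<exists>v3\<in>set p. igt (f v3) (f v1) \<and> igt (f v3) (f v2)"
      unfolding ext_strategy_def by blast
    from v3 obtain v3 where "v3 \<in> set p" "igt (f v3) (f v1)" "igt (f v3) (f v2)" by blast
    then have "igt (f' v3) (f' v1) \<and> igt (f' v3) (f' v2)"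
      using le[OF v(1)] le[OF v(2)] by (auto simp: igt_def f'_def)
    with p \<open>v3 \<in> set p\<close> show "\<exists>p. is_path E v1 v2 p \<and>
             (\<exists>v3\<in>set p. igt (f' v3) (f' v1) \<and> igt (f' v3) (f' v2))" by blast
  qed
  have "span V f' \<le> span V f"
    unfolding span_def
  proof -
    have "Max ((\<lambda>v. snd (f' v)) ` V) \<in> (\<lambda>v. snd (f' v)) ` V"
      using fin ne by (intro Max_in) auto
    then obtain u where u: "u \<in> V" "Max ((\<lambda>v. snd (f' v)) ` V) = snd (f' u)" by auto
    have "snd (f u) \<le> Max ((\<lambda>v. snd (f v)) ` V)"
      using fin u(1) by (intro Max_ge) auto
    then show "Max ((\<lambda>v. snd (f' v)) ` V) \<le> Max ((\<lambda>v. snd (f v)) ` V)"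
      using u le[OF u(1)] by linarith
  qed
  then have "optimal_strategy V E w f'"
    using s' fmin unfolding optimal_strategy_def by (meson le_trans)
  moreover have "\<forall>v\<in>V. ilen (f' v) = w v" by (simp add: f'_def ilen_def)
  ultimately show ?thesis by blast
qed

end
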